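(* Let $A$ be a finite alphabet with $|A|=k$, and let $L\subseteq A^*$ be $n$-PT. Let $m=f_k(n)$. Then ${\downarrow}L$ and ${\downarrow}_<L$ are $(k+1)(m+1)$-PT.
   Context: For words $u,v$, $u\sqsubseteq v$ (subword) means $u=a_1\cdots a_\ell$ with letters $a_i$ and $v=v_0a_1v_1\cdots a_\ell v_\ell$ for some words $v_i$; $u\sqsubset v$ means $u\sqsubseteq v$ and $u\neq v$. ${\downarrow}L=\{v~|~\exists u\in L: v\sqsubseteq u\}$ and ${\downarrow}_<L=\{v~|~\exists u\in L: v\sqsubset u\}$. For $n\in\mathbb{N}$, $u\sim_n v$ iff $u$ and $v$ have exactly the same subwords of length at most $n$; $L$ is $n$-PT if it is a union of $\sim_n$-classes. The functions $f_k$ ($k\geq1$) are defined by $f_1(n)=n$ and $f_{k+1}(n)=\max_{0\leq m\leq n}\bigl(m f_k(n+1-m)+m+f_k(n-m)\bigr)$. *)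

theory Defs
  imports Main "HOL-Library.Sublist"
begin

definition simeq :: "nat \<Rightarrow> 'a list \<Rightarrow> 'a list \<Rightarrow> bool" where
  "simeq n u v \<longleftrightarrow> (\<forall>w. length w \<le> n \<longrightarrow> (subseq w u \<longleftrightarrow> subseq w v))"

definition is_PT :: "'a set \<Rightarrow> nat \<Rightarrow> 'a list set \<Rightarrow> bool" where
  "is_PT A n L \<longleftrightarrow> L \<subseteq> lists A \<and>
     (\<forall>u\<in>lists A. \<forall>v\<in>lists A. simeq n u v \<longrightarrow> (u \<in> L \<longleftrightarrow> v \<in> L))"

definition down :: "'a list set \<Rightarrow> 'a list set" where
  "down L = {v. \<exists>u\<in>L. subseq v u}"

definition down_strict :: "'a list set \<Rightarrow> 'a list set" where
  "down_strict L = {v. \<exists>u\<in>L. strict_subseq v u}"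

text \<open>f k n = f_k(n) for k \<ge> 1 (the value at k = 0 is an irrelevant convention).\<close>
fun f :: "nat \<Rightarrow> nat \<Rightarrow> nat" where
  "f 0 n = n"
| "f (Suc 0) n = n"
| "f (Suc (Suc k)) n =
     Max ((\<lambda>m. m * f (Suc k) (n + 1 - m) + m + f (Suc k) (n - m)) ` {0..n})"

end

theory Submission
  imports Defs
begin


definition univ :: "'a set \<Rightarrow> nat \<Rightarrow> 'a list \<Rightarrow> bool" where
  "univ B p P \<longleftrightarrow> (\<forall>s. set s \<subseteq> B \<longrightarrow> length s \<le> p \<longrightarrow> subseq s P)"

definition dc :: "'a list set \<Rightarrow> bool" where
  "dc X \<longleftrightarrow> (\<forall>v w. w \<in> X \<longrightarrow> subseq v w \<longrightarrow> v \<in> X)"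

definition W :: "'a list set \<Rightarrow> nat \<Rightarrow> bool" where
  "W X h \<longleftrightarrow> (\<forall>v. v \<notin> X \<longrightarrow> (\<exists>w. subseq w v \<and> length w \<le> h \<and> w \<notin> X))"

definition cat :: "'a list set \<Rightarrow> 'a list set \<Rightarrow> 'a list set" where
  "cat X Y = {a @ b | a b. a \<in> X \<and> b \<in> Y}"

lemma simeq_refl: "simeq n u u" by (simp add: simeq_def)
lemma simeq_sym: "simeq n u v \<Longrightarrow> simeq n v u" by (auto simp add: simeq_def)
lemma simeq_trans: "simeq n u v \<Longrightarrow> simeq n v w \<Longrightarrow> simeq n u w" by (auto simp add: simeq_def)
lemma simeq_mono: "simeq n u v \<Longrightarrow> m \<le> n \<Longrightarrow> simeq m u v" by (auto simp add: simeq_def)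

lemma simeq_set: "simeq n u v \<Longrightarrow> 1 \<le> n \<Longrightarrow> set u = set v"
proof -
  assume a: "simeq n u v" "1 \<le> n"
  have "x \<in> set u \<longleftrightarrow> x \<in> set v" for x
  proof -
    have "subseq [x] u \<longleftrightarrow> subseq [x] v" using a unfolding simeq_def by auto
    thus ?thesis by (simp add: subseq_singleton_left)
  qed
  thus ?thesis by blast
qed

lemma subseq_set: "subseq u v \<Longrightarrow> set u \<subseteq> set v"
  by (induct rule: list_emb.induct) auto

lemma univ_mono: "univ B p P \<Longrightarrow> q \<le> p \<Longrightarrow> univ B q P"
  by (auto simp add: univ_def)

lemma univ_0: "univ B 0 P" by (auto simp add: univ_def)

lemma univ_app: "univ B p P \<Longrightarrow> univ B q Q \<Longrightarrow> univ B (p+q) (P@Q)"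
proof (unfold univ_def, intro allI impI)
  fix s assume a: "\<forall>s. set s \<subseteq> B \<longrightarrow> length s \<le> p \<longrightarrow> subseq s P"
    "\<forall>s. set s \<subseteq> B \<longrightarrow> length s \<le> q \<longrightarrow> subseq s Q" "set s \<subseteq> B" "length s \<le> p + q"
  have "subseq (take p s) P" using a(1)[rule_format, of "take p s"] a(3) set_take_subset by fastforce
  moreover have "subseq (drop p s) Q" using a(2)[rule_format, of "drop p s"] a(3,4) set_drop_subset by fastforce
  ultimately show "subseq s (P @ Q)" by (metis append_take_drop_id list_emb_append_mono)
qed

lemma univ_appL: "univ B p P \<Longrightarrow> univ B p (X@P)"
  by (auto simp add: univ_def intro: subseq_drop_many)
lemma univ_appR: "univ B p P \<Longrightarrow> univ B p (P@X)"
  by (auto simp add: univ_def intro: subseq_rev_drop_many)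

lemma univ_block: "B \<subseteq> insert c (set u) \<Longrightarrow> univ B 1 (u@[c])"
proof (unfold univ_def, intro allI impI)
  fix s assume a: "B \<subseteq> insert c (set u)" "set s \<subseteq> B" "length s \<le> 1"
  show "subseq s (u@[c])"
  proof (cases s)
    case Nil thus ?thesis by simp
  next
    case (Cons x s')
    with a have "s' = []" by auto
    with Cons a show ?thesis by (auto simp add: subseq_singleton_left)
  qed
qed



lemma subseq_drop: "subseq (drop i b) b"
  by (metis append_take_drop_id subseq_drop_many list_emb_refl)

lemma subseq_take: "subseq (take i b) b"
  by (metis append_take_drop_id subseq_rev_drop_many list_emb_refl)

lemma split_left:
  assumes u: "univ B p P" and sB: "set s \<subseteq> B" and sub: "subseq s (P @ Y)"
  shows "\<exists>s1 s2. s = s1 @ s2 \<and> subseq s1 P \<and> subseq s2 Y \<and> length s2 + min p (length s) \<le> length s"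
proof -
  obtain a b where ab: "s = a @ b" "subseq a P" "subseq b Y" using sub by (auto elim: subseq_appendE)
  show ?thesis
  proof (cases "min p (length s) \<le> length a")
    case True thus ?thesis using ab by (intro exI[of _ a] exI[of _ b]) auto
  next
    case False
    define j where "j = min p (length s)"
    have "set (take j s) \<subseteq> B" using sB set_take_subset by fastforce
    moreover have "length (take j s) \<le> p" unfolding j_def by simp
    ultimately have 1: "subseq (take j s) P" using u unfolding univ_def by blast
    have 2: "drop j s = drop (j - length a) b" using False ab unfolding j_def by simp
    have 3: "subseq (drop (j - length a) b) Y" using ab(3) subseq_drop subseq_order.order_trans by blast
    have 4: "length (drop j s) + j = length s" unfolding j_def by simp
    have 5: "subseq (drop j s) Y" using 2 3 by simp
    have 6: "length (drop j s) + min p (length s) \<le> length s" using 4 unfolding j_def by simp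
    show ?thesis
      by (rule exI[of _ "take j s"], rule exI[of _ "drop j s"]) (simp only: 1 5 6 append_take_drop_id simp_thms)
  qed
qed

lemma split_right:
  assumes u: "univ B q Q" and sB: "set s \<subseteq> B" and sub: "subseq s (X @ Q)"
  shows "\<exists>s1 s2. s = s1 @ s2 \<and> subseq s1 X \<and> subseq s2 Q \<and> length s1 + min q (length s) \<le> length s"
proof -
  obtain a b where ab: "s = a @ b" "subseq a X" "subseq b Q" using sub by (auto elim: subseq_appendE)
  show ?thesis
  proof (cases "min q (length s) \<le> length b")
    case True thus ?thesis using ab by (intro exI[of _ a] exI[of _ b]) auto
  next
    case False
    define j where "j = length s - min q (length s)"
    have "set (drop j s) \<subseteq> B" using sB set_drop_subset by fastforce
    moreover have "length (drop j s) \<le> q" unfolding j_def by simp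
    ultimately have 1: "subseq (drop j s) Q" using u unfolding univ_def by blast
    have 2: "take j s = take j a" using False ab unfolding j_def by simp
    have 3: "subseq (take j a) X" using ab(2) subseq_take subseq_order.order_trans by blast
    have 4: "length (take j s) + min q (length s) = length s" unfolding j_def by simp
    have 5: "subseq (take j s) X" using 2 3 by simp
    show ?thesis
      by (rule exI[of _ "take j s"], rule exI[of _ "drop j s"]) (simp only: 1 4 5 append_take_drop_id simp_thms order_refl)
  qed
qed


lemma BR_one:
  assumes uP: "univ B p P" and uQ: "univ B q Q"
    and sets: "set P \<subseteq> B" "set Q \<subseteq> B" "set u \<subseteq> B"
    and eq: "simeq m u u'" and n: "n \<le> p + q + m"
    and s: "length s \<le> n" "subseq s (P @ u @ Q)"
  shows "subseq s (P @ u' @ Q)"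
proof -
  have sB: "set s \<subseteq> B" using s(2) sets subseq_set by fastforce
  obtain s1 s' where 1: "s = s1 @ s'" "subseq s1 P" "subseq s' (u @ Q)" "length s' + min p (length s) \<le> length s"
    using split_left[OF uP sB] s(2) by blast
  have s'B: "set s' \<subseteq> B" using sB 1(1) by auto
  obtain s2 s3 where 2: "s' = s2 @ s3" "subseq s2 u" "subseq s3 Q" "length s2 + min q (length s') \<le> length s'"
    using split_right[OF uQ s'B] 1(3) by blast
  have "length s2 \<le> m \<or> s2 = []"
  proof (cases "length s \<le> p")
    case True then have "s' = []" using 1(4) by simp
    thus ?thesis using 2 by simp
  next
    case False
    show ?thesis
    proof (cases "length s' \<le> q")
      case True thus ?thesis using 2(4) by auto
    next
      case False2: False
      thus ?thesis using 2(4) 1(4) False s(1) n by auto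
    qed
  qed
  hence "subseq s2 u'" using 2(2) eq unfolding simeq_def by auto
  thus ?thesis using 1 2 by (simp add: list_emb_append_mono)
qed

lemma BR:
  assumes uP: "univ B p P" and uQ: "univ B q Q"
    and sets: "set P \<subseteq> B" "set Q \<subseteq> B" "set u \<subseteq> B" "set u' \<subseteq> B"
    and eq: "simeq m u u'" and n: "n \<le> p + q + m"
  shows "simeq n (P @ u @ Q) (P @ u' @ Q)"
  unfolding simeq_def
  using BR_one[OF uP uQ sets(1,2,3) eq n] BR_one[OF uP uQ sets(1,2,4) simeq_sym[OF eq] n] by blast




lemma dc_cat: "dc X \<Longrightarrow> dc Y \<Longrightarrow> dc (cat X Y)"
  unfolding dc_def
proof (intro allI impI)
  fix v w assume a: "\<forall>v w. w \<in> X \<longrightarrow> subseq v w \<longrightarrow> v \<in> X" "\<forall>v w. w \<in> Y \<longrightarrow> subseq v w \<longrightarrow> v \<in> Y"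
    "w \<in> cat X Y" "subseq v w"
  then obtain a b where ab: "w = a @ b" "a \<in> X" "b \<in> Y" unfolding cat_def by blast
  then obtain v1 v2 where "v = v1 @ v2" "subseq v1 a" "subseq v2 b" using a(4) by (auto elim: subseq_appendE)
  thus "v \<in> cat X Y" using a(1,2) ab unfolding cat_def by blast
qed

lemma cat_mem: "a \<in> X \<Longrightarrow> b \<in> Y \<Longrightarrow> a @ b \<in> cat X Y"
  unfolding cat_def by blast

lemma snoc_not_sub:
  assumes "subseq w (g @ [c])" "\<not> subseq w g"
  shows "\<exists>w'. w = w' @ [c] \<and> subseq w' g"
proof -
  obtain a b where ab: "w = a @ b" "subseq a g" "subseq b [c]" using assms(1) by (auto elim: subseq_appendE)
  have "b \<noteq> []" using ab assms(2) by auto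
  hence "b = [c]" using ab(3) by (cases b) (auto split: if_splits)
  thus ?thesis using ab by auto
qed

lemma cons_not_sub:
  assumes "subseq w (c # r)" "\<not> subseq w r"
  shows "\<exists>w'. w = c # w' \<and> subseq w' r"
  using assms by (cases w) (auto split: if_splits)



lemma greatest_prefix:
  assumes "[] \<in> X"
  shows "\<exists>i \<le> length v. take i v \<in> X \<and> (\<forall>j. i < j \<and> j \<le> length v \<longrightarrow> take j v \<notin> X)"
proof -
  define i where "i = (GREATEST i. i \<le> length v \<and> take i v \<in> X)"
  have ex: "0 \<le> length v \<and> take 0 v \<in> X" using assms by simp
  have bnd: "\<forall>y. y \<le> length v \<and> take y v \<in> X \<longrightarrow> y \<le> length v" by simp
  have 1: "i \<le> length v \<and> take i v \<in> X" unfolding i_def by (rule GreatestI_nat[of "\<lambda>i. i \<le> length v \<and> take i v \<in> X" 0 "length v"]) (use ex in auto)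
  have 2: "\<forall>j. i < j \<and> j \<le> length v \<longrightarrow> take j v \<notin> X"
  proof (intro allI impI)
    fix j assume j: "i < j \<and> j \<le> length v"
    show "take j v \<notin> X"
    proof
      assume "take j v \<in> X"
      hence "j \<le> i" unfolding i_def
        using Greatest_le_nat[of "\<lambda>i. i \<le> length v \<and> take i v \<in> X" j "length v"] j by blast
      thus False using j by simp
    qed
  qed
  show ?thesis using 1 2 by blast
qed

lemma prefix_split_notin:
  assumes "w1 = w1' @ [c]" "w1 \<notin> X" "dc X" "a \<in> X" "a @ b = w1 @ T"
  shows "\<exists>s. s \<noteq> [] \<and> b = s @ T \<and> last s = c"
proof -
  have nl: "\<not> length w1 \<le> length a"
  proof
    assume l: "length w1 \<le> length a"
    have "prefix w1 (w1 @ T)" "prefix a (a @ b)" by (rule prefixI, simp)+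
    hence "prefix w1 (a @ b)" "prefix a (a @ b)" using assms(5) by simp_all
    hence "prefix w1 a" using l prefix_length_prefix by blast
    hence "w1 \<in> X" using assms(3,4) unfolding dc_def by (meson prefix_imp_subseq)
    thus False using assms(2) by simp
  qed
  have "b = drop (length a) (a @ b)" by simp
  also have "\<dots> = drop (length a) (w1 @ T)" using assms(5) by simp
  also have "\<dots> = drop (length a) w1 @ T" using nl by simp
  finally have 1: "b = drop (length a) w1 @ T" .
  have 2: "drop (length a) w1 \<noteq> []" using nl by simp
  have 3: "last (drop (length a) w1) = c" using nl assms(1) by (simp add: last_drop)
  show ?thesis using 1 2 3 by blast
qed


lemma W_cat:
  assumes dX: "dc X" and dY: "dc Y" and eX: "[] \<in> X" and wX: "W X h1" and wY: "W Y h2"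
  shows "W (cat X Y) (h1 + h2)"
  unfolding W_def
proof (intro allI impI)
  fix v assume v: "v \<notin> cat X Y"
  obtain i where i: "i \<le> length v" "take i v \<in> X" "\<forall>j. i < j \<and> j \<le> length v \<longrightarrow> take j v \<notin> X"
    using greatest_prefix[OF eX] by blast
  define g where "g = take i v"
  define r where "r = drop i v"
  have vgr: "v = g @ r" unfolding g_def r_def by simp
  have rY: "r \<notin> Y"
  proof
    assume "r \<in> Y"
    hence "g @ r \<in> cat X Y" using i(2) cat_mem unfolding g_def by blast
    thus False using v vgr by simp
  qed
  show "\<exists>w. subseq w v \<and> length w \<le> h1 + h2 \<and> w \<notin> cat X Y"
  proof (cases r)
    case Nil
    hence "[] \<notin> cat X Y" using rY unfolding cat_def by auto
    thus ?thesis by (intro exI[of _ "[]"]) auto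
  next
    case (Cons c r')
    have dr: "drop i v = c # r'" using Cons unfolding r_def .
    hence lt: "i < length v" by (cases "i < length v") auto
    have vi: "v ! i = c" using dr by (rule nth_via_drop)
    have "take (Suc i) v = take i v @ [v ! i]" using lt by (rule take_Suc_conv_app_nth)
    hence tk: "take (Suc i) v = g @ [c]" using vi unfolding g_def by simp
    have "take (Suc i) v \<notin> X" using i(3) lt by simp
    hence gcX: "g @ [c] \<notin> X" using tk by simp
    obtain w1 where w1: "subseq w1 (g @ [c])" "length w1 \<le> h1" "w1 \<notin> X"
      using wX[unfolded W_def, rule_format, OF gcX] by blast
    have gX: "g \<in> X" using i(2) unfolding g_def .
    have "\<not> subseq w1 g"
    proof
      assume "subseq w1 g"
      hence "w1 \<in> X" using dX[unfolded dc_def, rule_format, OF gX] by blast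
      thus False using w1(3) by simp
    qed
    hence "\<exists>w'. w1 = w' @ [c] \<and> subseq w' g" by (rule snoc_not_sub[OF w1(1)])
    then obtain w1' where w1'c: "w1 = w1' @ [c] \<and> subseq w1' g" ..
    hence w1': "w1 = w1' @ [c]" "subseq w1' g" by simp_all
    have crY: "c # r' \<notin> Y" using rY Cons by simp
    obtain w2 where w2: "subseq w2 (c # r')" "length w2 \<le> h2" "w2 \<notin> Y"
      using wY[unfolded W_def, rule_format, OF crY] by blast
    show ?thesis
    proof (cases "subseq w2 r'")
      case True
      have "w1 @ w2 \<notin> cat X Y"
      proof
        assume "w1 @ w2 \<in> cat X Y"
        then obtain a b where ab: "w1 @ w2 = a @ b" "a \<in> X" "b \<in> Y" unfolding cat_def by blast
        obtain s where "b = s @ w2" using prefix_split_notin[OF w1'(1) w1(3) dX ab(2) ab(1)[symmetric]] by blast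
        hence "subseq w2 b" by (simp add: subseq_drop_many)
        thus False using dY[unfolded dc_def, rule_format, OF ab(3)] w2(3) by blast
      qed
      moreover have "subseq (w1 @ w2) v"
      proof -
        have "subseq (w1 @ w2) ((g @ [c]) @ r')" using w1(1) True by (rule list_emb_append_mono)
        thus ?thesis using vgr Cons by simp
      qed
      ultimately show ?thesis using w1(2) w2(2) by (intro exI[of _ "w1 @ w2"]) auto
    next
      case False
      hence "\<exists>w'. w2 = c # w' \<and> subseq w' r'" by (rule cons_not_sub[OF w2(1)])
      then obtain w2' where w2'c: "w2 = c # w2' \<and> subseq w2' r'" ..
      hence w2': "w2 = c # w2'" "subseq w2' r'" by simp_all
      have "w1 @ w2' \<notin> cat X Y"
      proof
        assume "w1 @ w2' \<in> cat X Y"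
        then obtain a b where ab: "w1 @ w2' = a @ b" "a \<in> X" "b \<in> Y" unfolding cat_def by blast
        obtain s where s: "s \<noteq> []" "b = s @ w2'" "last s = c" using prefix_split_notin[OF w1'(1) w1(3) dX ab(2) ab(1)[symmetric]] by blast
        obtain s' where "s = s' @ [c]" using s(1,3) by (metis append_butlast_last_id)
        hence "b = s' @ (c # w2')" using s(2) by simp
        hence "subseq w2 b" using w2'(1) by (simp add: subseq_drop_many)
        thus False using dY[unfolded dc_def, rule_format, OF ab(3)] w2(3) by blast
      qed
      moreover have "subseq (w1 @ w2') v" using w1'(2) w2'(2) vgr Cons w1'(1)
        by (simp add: list_emb_append_mono)
      moreover have "length (w1 @ w2') \<le> h1 + h2" using w1(2) w2(2) w2'(1) by simp
      ultimately show ?thesis by blast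
    qed
  qed
qed




lemma dc_L: "dc {[], [c]}"
  unfolding dc_def
proof (intro allI impI)
  fix v w :: "'a list" assume "w \<in> {[], [c]}" "subseq v w"
  thus "v \<in> {[], [c]}" by (cases v) (auto split: if_splits)
qed

lemma W_catL:
  assumes dX: "dc X" and eX: "[] \<in> X" and wX: "W X h"
  shows "W (cat X {[], [c]}) (h + 1)"
  unfolding W_def
proof (intro allI impI)
  fix v assume v: "v \<notin> cat X {[], [c]}"
  obtain i where i: "i \<le> length v" "take i v \<in> X" "\<forall>j. i < j \<and> j \<le> length v \<longrightarrow> take j v \<notin> X"
    using greatest_prefix[OF eX] by blast
  define g where "g = take i v"
  define r where "r = drop i v"
  have vgr: "v = g @ r" unfolding g_def r_def by simp
  have gX: "g \<in> X" using i(2) unfolding g_def .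
  have rL: "r \<notin> {[], [c]}"
  proof
    assume "r \<in> {[], [c]}"
    hence "g @ r \<in> cat X {[], [c]}" using gX cat_mem by blast
    thus False using v vgr by simp
  qed
  then obtain d r' where Cons: "r = d # r'" by (cases r) auto
  have dr: "drop i v = d # r'" using Cons unfolding r_def .
  hence lt: "i < length v" by (cases "i < length v") auto
  have vi: "v ! i = d" using dr by (rule nth_via_drop)
  have "take (Suc i) v = take i v @ [v ! i]" using lt by (rule take_Suc_conv_app_nth)
  hence tk: "take (Suc i) v = g @ [d]" using vi unfolding g_def by simp
  have "take (Suc i) v \<notin> X" using i(3) lt by simp
  hence gdX: "g @ [d] \<notin> X" using tk by simp
  obtain w1 where w1: "subseq w1 (g @ [d])" "length w1 \<le> h" "w1 \<notin> X"
    using wX[unfolded W_def, rule_format, OF gdX] by blast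
  have "\<not> subseq w1 g"
  proof
    assume "subseq w1 g"
    hence "w1 \<in> X" using dX[unfolded dc_def, rule_format, OF gX] by blast
    thus False using w1(3) by simp
  qed
  hence "\<exists>w'. w1 = w' @ [d] \<and> subseq w' g" by (rule snoc_not_sub[OF w1(1)])
  then obtain w1' where w1'c: "w1 = w1' @ [d] \<and> subseq w1' g" ..
  hence w1': "w1 = w1' @ [d]" "subseq w1' g" by simp_all
  show "\<exists>w. subseq w v \<and> length w \<le> h + 1 \<and> w \<notin> cat X {[], [c]}"
  proof (cases "d = c")
    case True
    then have "r' \<noteq> []" using rL Cons by auto
    then obtain e r'' where r': "r' = e # r''" by (cases r') auto
    have nin: "w1 @ [e] \<notin> cat X {[], [c]}"
    proof
      assume "w1 @ [e] \<in> cat X {[], [c]}"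
      then obtain a b where ab: "w1 @ [e] = a @ b" "a \<in> X" "b \<in> {[], [c]}" unfolding cat_def by blast
      have "\<exists>s. s \<noteq> [] \<and> b = s @ [e] \<and> last s = d"
        using prefix_split_notin[OF w1'(1) w1(3) dX ab(2) ab(1)[symmetric]] .
      then obtain s where s: "s \<noteq> [] \<and> b = s @ [e] \<and> last s = d" ..
      hence "length b \<ge> 2" by (cases s) auto
      thus False using ab(3) by auto
    qed
    have "subseq (w1 @ [e]) ((g @ [d]) @ (e # r''))" using w1(1) by (intro list_emb_append_mono) auto
    hence "subseq (w1 @ [e]) v" using vgr Cons r' by simp
    thus ?thesis using nin w1(2) by (intro exI[of _ "w1 @ [e]"]) auto
  next
    case False
    have nin: "w1 \<notin> cat X {[], [c]}"
    proof
      assume "w1 \<in> cat X {[], [c]}"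
      then obtain a b where ab: "w1 @ [] = a @ b" "a \<in> X" "b \<in> {[], [c]}" unfolding cat_def by auto
      have "\<exists>s. s \<noteq> [] \<and> b = s @ [] \<and> last s = d"
        using prefix_split_notin[OF w1'(1) w1(3) dX ab(2) ab(1)[symmetric]] .
      then obtain s where s: "s \<noteq> [] \<and> b = s @ [] \<and> last s = d" ..
      thus False using ab(3) False by auto
    qed
    have "subseq w1 ((g @ [d]) @ r')" using w1(1) by (rule subseq_rev_drop_many)
    hence "subseq w1 v" using vgr Cons by simp
    thus ?thesis using nin w1(2) by (intro exI[of _ w1]) auto
  qed
qed

lemma W_lists: "W {v. set v \<subseteq> B} 1"
  unfolding W_def
proof (intro allI impI)
  fix v :: "'a list" assume "v \<notin> {v. set v \<subseteq> B}"
  then obtain a where a: "a \<in> set v" "a \<notin> B" by auto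
  have "subseq [a] v" using a(1) by (simp add: subseq_singleton_left)
  thus "\<exists>w. subseq w v \<and> length w \<le> 1 \<and> w \<notin> {v. set v \<subseteq> B}" using a(2) by (intro exI[of _ "[a]"]) auto
qed

lemma dc_lists: "dc {v. set v \<subseteq> B}"
  unfolding dc_def using subseq_set by fastforce

lemma W_down: "W {v. subseq v x} (length x + 1)"
  unfolding W_def
proof (intro allI impI)
  fix v assume v: "v \<notin> {v. subseq v x}"
  show "\<exists>w. subseq w v \<and> length w \<le> length x + 1 \<and> w \<notin> {v. subseq v x}"
  proof (cases "length v \<le> length x")
    case True thus ?thesis using v by (intro exI[of _ v]) auto
  next
    case False
    have "length (take (length x + 1) v) = length x + 1" using False by simp
    hence "\<not> subseq (take (length x + 1) v) x" using not_subseq_length by (metis lessI Suc_eq_plus1)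
    thus ?thesis using subseq_take by (intro exI[of _ "take (length x + 1) v"]) auto
  qed
qed

lemma dc_down: "dc {v. subseq v x}"
  unfolding dc_def using subseq_order.order_trans by blast



definition blk :: "('a list \<times> 'a) list \<Rightarrow> 'a list \<Rightarrow> 'a list" where
  "blk bs t = concat (map (\<lambda>(u,c). u @ [c]) bs) @ t"

lemma blk_Nil[simp]: "blk [] t = t" by (simp add: blk_def)
lemma blk_Cons[simp]: "blk ((u,c) # bs) t = u @ c # blk bs t" by (simp add: blk_def)
lemma blk_app: "blk (bs1 @ bs2) t = concat (map (\<lambda>(u,c). u @ [c]) bs1) @ blk bs2 t"
  by (simp add: blk_def)

definition bprop :: "'a set \<Rightarrow> ('a list \<times> 'a) list \<Rightarrow> bool" where
  "bprop B bs \<longleftrightarrow> (\<forall>(u,c) \<in> set bs. c \<in> B \<and> set u \<subseteq> B - {c} \<and> B \<subseteq> insert c (set u))"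

lemma bprop_Cons[simp]: "bprop B ((u,c) # bs) \<longleftrightarrow> (c \<in> B \<and> set u \<subseteq> B - {c} \<and> B \<subseteq> insert c (set u)) \<and> bprop B bs"
  by (simp add: bprop_def)
lemma bprop_Nil[simp]: "bprop B []" by (simp add: bprop_def)

lemma split_rich:
  assumes "B \<subseteq> set w" "B \<noteq> {}"
  shows "\<exists>u c w'. w = u @ c # w' \<and> c \<in> B \<and> c \<notin> set u \<and> B \<subseteq> insert c (set u)"
  using assms
proof (induction w rule: rev_induct)
  case Nil thus ?case by simp
next
  case (snoc a w)
  show ?case
  proof (cases "B \<subseteq> set w")
    case True
    then obtain u c w' where h: "w = u @ c # w' \<and> c \<in> B \<and> c \<notin> set u \<and> B \<subseteq> insert c (set u)"
      using snoc.IH snoc.prems(2) by blast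
    show ?thesis
      by (rule exI[of _ u], rule exI[of _ c], rule exI[of _ "w' @ [a]"]) (use h in simp)
  next
    case False
    then obtain b where b: "b \<in> B" "b \<notin> set w" by auto
    hence "b = a" using snoc.prems(1) by auto
    hence "a \<in> B" "a \<notin> set w" using b by auto
    moreover have "B \<subseteq> insert a (set w)" using snoc.prems(1) by auto
    ultimately show ?thesis
      by (intro exI[of _ w] exI[of _ a] exI[of _ "[]"]) simp
  qed
qed

lemma decomp:
  assumes "set w \<subseteq> B" "B \<noteq> {}"
  shows "\<exists>bs t. w = blk bs t \<and> bprop B bs \<and> \<not> B \<subseteq> set t \<and> set t \<subseteq> B"
  using assms
proof (induction "length w" arbitrary: w rule: less_induct)
  case less
  show ?case
  proof (cases "B \<subseteq> set w")
    case False
    thus ?thesis using less.prems by (intro exI[of _ "[]"] exI[of _ w]) simp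
  next
    case True
    obtain u c w' where h: "w = u @ c # w' \<and> c \<in> B \<and> c \<notin> set u \<and> B \<subseteq> insert c (set u)"
      using split_rich[OF True less.prems(2)] by blast
    have l: "length w' < length w" using h by simp
    have s: "set w' \<subseteq> B" using h less.prems(1) by auto
    obtain bs t where bt: "w' = blk bs t \<and> bprop B bs \<and> \<not> B \<subseteq> set t \<and> set t \<subseteq> B"
      using less.hyps[OF l s less.prems(2)] by blast
    have "set u \<subseteq> B - {c}" using h less.prems(1) by auto
    thus ?thesis using h bt
      by (intro exI[of _ "(u,c) # bs"] exI[of _ t]) simp
  qed
qed

lemma univ_blk: "bprop B bs \<Longrightarrow> univ B (length bs) (blk bs t)"
proof (induction bs)
  case Nil thus ?case by (simp add: univ_0)
next
  case (Cons x bs)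
  obtain u c where x: "x = (u,c)" by (cases x)
  have "univ B 1 (u @ [c])" using Cons.prems x by (intro univ_block) simp
  moreover have "univ B (length bs) (blk bs t)" using Cons x by simp
  ultimately have "univ B (1 + length bs) ((u @ [c]) @ blk bs t)" by (rule univ_app)
  thus ?case using x by simp
qed

lemma set_blk: "bprop B bs \<Longrightarrow> set t \<subseteq> B \<Longrightarrow> set (blk bs t) \<subseteq> B"
  by (induction bs) (auto simp: bprop_def)

definition rel :: "nat \<Rightarrow> 'a list \<times> 'a \<Rightarrow> 'a list \<times> 'a \<Rightarrow> bool" where
  "rel m = (\<lambda>(z,c') (u,c). c' = c \<and> set z = set u \<and> simeq m z u)"

lemma rel_simp[simp]: "rel m (z,c') (u,c) \<longleftrightarrow> c' = c \<and> set z = set u \<and> simeq m z u"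
  by (simp add: rel_def)

lemma univ_simeq:
  assumes "univ B n x" "set x \<subseteq> B" "set v \<subseteq> B"
  shows "simeq n (x @ v) x"
  unfolding simeq_def
proof (intro allI impI iffI)
  fix s assume "length s \<le> n" "subseq s (x @ v)"
  moreover have "set s \<subseteq> B" using subseq_set[OF \<open>subseq s (x @ v)\<close>] assms(2,3) by auto
  ultimately show "subseq s x" using assms(1) unfolding univ_def by blast
next
  fix s assume "subseq s x"
  thus "subseq s (x @ v)" by (rule subseq_rev_drop_many)
qed

lemma Rep:
  "list_all2 (rel m) zs bs \<Longrightarrow> bprop B bs \<Longrightarrow> set zt \<subseteq> B \<Longrightarrow> set t \<subseteq> B \<Longrightarrow> simeq m' zt t \<Longrightarrow>
    univ B p P \<Longrightarrow> set P \<subseteq> B \<Longrightarrow> n + 1 \<le> p + length bs + m \<Longrightarrow> n \<le> p + length bs + m' \<Longrightarrow>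
  simeq n (P @ blk bs t) (P @ blk zs zt)"
proof (induction bs arbitrary: zs P p)
  case Nil
  have zs: "zs = []" using Nil.prems by (simp add: list_all2_Nil2)
  have "simeq n (P @ t @ []) (P @ zt @ [])"
    by (rule BR[OF Nil.prems(6) univ_0 Nil.prems(7) _ Nil.prems(4,3) simeq_sym[OF Nil.prems(5)]]) (use Nil.prems in auto)
  thus ?case using zs by simp
next
  case (Cons x bs)
  obtain u c where x: "x = (u,c)" by (cases x)
  obtain z' zs' where zs: "zs = z' # zs'" using Cons.prems(1) by (cases zs) auto
  obtain z c' where z': "z' = (z,c')" by (cases z')
  have r: "c' = c" "set z = set u" "simeq m z u" using Cons.prems(1) zs z' x by auto
  have l2: "list_all2 (rel m) zs' bs" using Cons.prems(1) zs by simp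
  have bp: "c \<in> B" "set u \<subseteq> B - {c}" "B \<subseteq> insert c (set u)" "bprop B bs" using Cons.prems(2) x by auto
  have ub: "univ B (length bs) (c # blk bs t)"
    using univ_appL[OF univ_blk[OF bp(4)], of "[c]"] by simp
  have sQ: "set (c # blk bs t) \<subseteq> B" using set_blk[OF bp(4) Cons.prems(4)] bp(1) by simp
  have 1: "simeq n (P @ u @ (c # blk bs t)) (P @ z @ (c # blk bs t))"
    by (rule BR[OF Cons.prems(6) ub Cons.prems(7) sQ _ _ simeq_sym[OF r(3)]])
       (use bp r Cons.prems(8) in auto)
  have uz: "univ B (p + 1) (P @ z @ [c])"
    using univ_app[OF Cons.prems(6) univ_block[of B c z]] bp r by simp
  have sz: "set (P @ z @ [c]) \<subseteq> B" using Cons.prems(7) bp r by auto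
  have 2: "simeq n ((P @ z @ [c]) @ blk bs t) ((P @ z @ [c]) @ blk zs' zt)"
    by (rule Cons.IH[OF l2 bp(4) Cons.prems(3,4,5) uz sz]) (use Cons.prems(8,9) in auto)
  have two: "simeq n (P @ z @ c # blk bs t) (P @ z @ c # blk zs' zt)" using 2 by simp
  have "simeq n (P @ blk (x # bs) t) (P @ blk zs zt)"
    using simeq_trans[OF 1 two] x zs z' r(1) by simp
  thus ?case .
qed

lemma f_elem: "m \<le> n \<Longrightarrow> m * f (Suc k) (n + 1 - m) + m + f (Suc k) (n - m) \<le> f (Suc (Suc k)) n"
  by simp

lemma f_mono1: "f (Suc k) n \<le> f (Suc (Suc k)) n"
  using f_elem[of 0 n k] by simp

lemma f_ge: "1 \<le> k \<Longrightarrow> n \<le> f k n"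
proof (induction k)
  case 0 thus ?case by simp
next
  case (Suc k)
  show ?case
  proof (cases k)
    case 0 thus ?thesis by simp
  next
    case (Suc k')
    thus ?thesis using Suc.IH f_mono1[of k' n] by simp
  qed
qed

lemma f_mono: "1 \<le> c \<Longrightarrow> c \<le> k \<Longrightarrow> f c n \<le> f k n"
proof (induction k)
  case 0 thus ?case by simp
next
  case (Suc k)
  show ?case
  proof (cases "c = Suc k")
    case True thus ?thesis by simp
  next
    case False
    hence "c \<le> k" using Suc.prems by simp
    hence "f c n \<le> f k n" using Suc by simp
    moreover obtain k' where "k = Suc k'" using \<open>c \<le> k\<close> Suc.prems(1) by (cases k) auto
    ultimately show ?thesis using f_mono1[of k' n] by simp
  qed
qed



definition sound :: "nat \<Rightarrow> 'a list \<Rightarrow> 'a list set \<Rightarrow> bool" where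
  "sound m y E \<longleftrightarrow> (\<forall>v\<in>E. \<exists>z. set z \<subseteq> set y \<and> simeq m z y \<and> subseq v z)"

lemma dc_nil: "dc E \<Longrightarrow> y \<in> E \<Longrightarrow> [] \<in> E"
  unfolding dc_def by blast

lemma inner:
  fixes B :: "'a set" and t :: "'a list"
  assumes IH: "\<And>y m. card (set (y::'a list)) \<le> K \<Longrightarrow> \<exists>E. y \<in> E \<and> dc E \<and> sound m y E \<and> W E (K * (f K m + 1) + 1)"
  shows "bprop B bs \<Longrightarrow> (\<forall>(u,c)\<in>set bs. card (set u) \<le> K) \<Longrightarrow> card (set t) \<le> K \<Longrightarrow> 1 \<le> m1 \<Longrightarrow>
    \<exists>E. blk bs t \<in> E \<and> dc E \<and> W E (length bs * ((K * (f K m1 + 1) + 1) + 1) + (K * (f K m2 + 1) + 1)) \<and>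
      (\<forall>v\<in>E. \<exists>zs zt. list_all2 (rel m1) zs bs \<and> set zt \<subseteq> set t \<and> simeq m2 zt t \<and> subseq v (blk zs zt))"
proof (induction bs)
  case Nil
  have "\<exists>E. t \<in> E \<and> dc E \<and> sound m2 t E \<and> W E (K * (f K m2 + 1) + 1)" by (rule IH) (use Nil.prems in auto)
  then obtain E where E: "t \<in> E \<and> dc E \<and> sound m2 t E \<and> W E (K * (f K m2 + 1) + 1)" ..
  have "\<forall>v\<in>E. \<exists>zs zt. list_all2 (rel m1) zs [] \<and> set zt \<subseteq> set t \<and> simeq m2 zt t \<and> subseq v (blk zs zt)"
  proof
    fix v assume "v \<in> E"
    hence "\<exists>z. set z \<subseteq> set t \<and> simeq m2 z t \<and> subseq v z" using E unfolding sound_def by blast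
    then obtain z where "set z \<subseteq> set t \<and> simeq m2 z t \<and> subseq v z" ..
    thus "\<exists>zs zt. list_all2 (rel m1) zs [] \<and> set zt \<subseteq> set t \<and> simeq m2 zt t \<and> subseq v (blk zs zt)"
      by (intro exI[of _ "[]"] exI[of _ z]) simp
  qed
  thus ?case using E by (intro exI[of _ E]) simp
next
  case (Cons x bs)
  obtain u c where x: "x = (u,c)" by (cases x)
  have cu: "card (set u) \<le> K" using Cons.prems x by auto
  have bpu: "c \<in> B" "set u \<subseteq> B - {c}" "B \<subseteq> insert c (set u)" "bprop B bs" using Cons.prems x by auto
  have "\<exists>E. u \<in> E \<and> dc E \<and> sound m1 u E \<and> W E (K * (f K m1 + 1) + 1)" by (rule IH[OF cu])
  then obtain Eu where Eu: "u \<in> Eu \<and> dc Eu \<and> sound m1 u Eu \<and> W Eu (K * (f K m1 + 1) + 1)" ..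
  have "\<exists>E. blk bs t \<in> E \<and> dc E \<and> W E (length bs * ((K * (f K m1 + 1) + 1) + 1) + (K * (f K m2 + 1) + 1)) \<and>
      (\<forall>v\<in>E. \<exists>zs zt. list_all2 (rel m1) zs bs \<and> set zt \<subseteq> set t \<and> simeq m2 zt t \<and> subseq v (blk zs zt))"
    by (rule Cons.IH) (use bpu Cons.prems in auto)
  then obtain Er where Er: "blk bs t \<in> Er \<and> dc Er \<and> W Er (length bs * ((K * (f K m1 + 1) + 1) + 1) + (K * (f K m2 + 1) + 1)) \<and>
      (\<forall>v\<in>Er. \<exists>zs zt. list_all2 (rel m1) zs bs \<and> set zt \<subseteq> set t \<and> simeq m2 zt t \<and> subseq v (blk zs zt))" ..
  define X where "X = cat Eu {[], [c]}"
  have dEu: "dc Eu" using Eu by simp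
  have uEu: "u \<in> Eu" using Eu by simp
  have nEu: "[] \<in> Eu" by (rule dc_nil[OF dEu uEu])
  have dX: "dc X" unfolding X_def by (rule dc_cat[OF dEu dc_L])
  have eX: "[] \<in> X" unfolding X_def using cat_mem[OF nEu, of "[]" "{[],[c]}"] by simp
  have wX: "W X (K * (f K m1 + 1) + 1 + 1)" unfolding X_def
    by (rule W_catL[OF dEu nEu]) (use Eu in simp)
  have wE: "W (cat X Er) ((K * (f K m1 + 1) + 1 + 1) + (length bs * ((K * (f K m1 + 1) + 1) + 1) + (K * (f K m2 + 1) + 1)))"
    by (rule W_cat[OF dX _ eX wX]) (use Er in simp_all)
  have mem: "blk (x # bs) t \<in> cat X Er"
  proof -
    have "u @ [c] \<in> X" unfolding X_def using cat_mem[of u Eu "[c]" "{[],[c]}"] Eu by simp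
    hence "(u @ [c]) @ blk bs t \<in> cat X Er" using cat_mem Er by blast
    thus ?thesis using x by simp
  qed
  have snd: "\<forall>v\<in>cat X Er. \<exists>zs zt. list_all2 (rel m1) zs (x # bs) \<and> set zt \<subseteq> set t \<and> simeq m2 zt t \<and> subseq v (blk zs zt)"
  proof
    fix v assume "v \<in> cat X Er"
    then obtain a b where ab: "v = a @ b" "a \<in> X" "b \<in> Er" unfolding cat_def by blast
    then obtain a1 l where al: "a = a1 @ l" "a1 \<in> Eu" "l \<in> {[], [c]}" unfolding X_def cat_def by blast
    have "\<exists>z. set z \<subseteq> set u \<and> simeq m1 z u \<and> subseq a1 z" using Eu al(2) unfolding sound_def by blast
    then obtain z where z: "set z \<subseteq> set u \<and> simeq m1 z u \<and> subseq a1 z" ..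
    have "\<exists>zs zt. list_all2 (rel m1) zs bs \<and> set zt \<subseteq> set t \<and> simeq m2 zt t \<and> subseq b (blk zs zt)"
      using Er ab(3) by blast
    then obtain zs zt where zz: "list_all2 (rel m1) zs bs \<and> set zt \<subseteq> set t \<and> simeq m2 zt t \<and> subseq b (blk zs zt)" by blast
    have sz: "set z = set u" using simeq_set[of m1 z u] z Cons.prems by simp
    have lc: "subseq l [c]" using al(3) by auto
    have "subseq ((a1 @ l) @ b) ((z @ [c]) @ blk zs zt)"
      by (intro list_emb_append_mono) (use z lc zz in auto)
    hence "subseq v (blk ((z,c) # zs) zt)" using ab(1) al(1) by simp
    moreover have "list_all2 (rel m1) ((z,c) # zs) (x # bs)" using x zz sz z by simp
    ultimately show "\<exists>zs zt. list_all2 (rel m1) zs (x # bs) \<and> set zt \<subseteq> set t \<and> simeq m2 zt t \<and> subseq v (blk zs zt)"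
      using zz by blast
  qed
  have dE: "dc (cat X Er)" using dc_cat dX Er by blast
  have bnd: "(K * (f K m1 + 1) + 1 + 1) + (length bs * ((K * (f K m1 + 1) + 1) + 1) + (K * (f K m2 + 1) + 1))
     = length (x # bs) * ((K * (f K m1 + 1) + 1) + 1) + (K * (f K m2 + 1) + 1)" by simp
  have wE': "W (cat X Er) (length (x # bs) * ((K * (f K m1 + 1) + 1) + 1) + (K * (f K m2 + 1) + 1))"
    using wE by (simp only: bnd)
  show ?case by (rule exI[of _ "cat X Er"]) (intro conjI mem dE wE' snd)
qed



lemma W_mono: "W E h \<Longrightarrow> h \<le> h' \<Longrightarrow> W E h'"
  unfolding W_def by (meson order.trans)

lemma set_blk_rel: "list_all2 (rel m) zs bs \<Longrightarrow> bprop B bs \<Longrightarrow> set zt \<subseteq> B \<Longrightarrow> set (blk zs zt) \<subseteq> B"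
proof (induction zs bs rule: list_all2_induct)
  case Nil thus ?case by simp
next
  case (Cons z zs b bs)
  obtain zz c' where z: "z = (zz,c')" by (cases z)
  obtain u c where b: "b = (u,c)" by (cases b)
  have "c' = c" "set zz = set u" using Cons.hyps(1) z b by auto
  moreover have "c \<in> B" "set u \<subseteq> B - {c}" "bprop B bs" using Cons.prems(1) b by auto
  moreover have "set (blk zs zt) \<subseteq> B" using Cons.IH Cons.prems \<open>bprop B bs\<close> by simp
  ultimately show ?case using z b by auto
qed

lemma length_blk: "length (blk bs t) = sum_list (map (\<lambda>(u,c). length u + 1) bs) + length t"
  by (induction bs) auto

lemma sum_blk_bound: "(\<forall>(u,c)\<in>set bs. length u \<le> a) \<Longrightarrow> sum_list (map (\<lambda>(u,c). length u + 1) bs) \<le> length bs * (a + 1)"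
  by (induction bs) auto

lemma arith_main:
  fixes K r n a b F :: nat
  assumes "r < n" "n + 1 - r \<le> a" "r * a + r + b \<le> F"
  shows "r * ((K * (a + 1) + 1) + 1) + (K * (b + 1) + 1) \<le> Suc K * (F + 1) + 1"
proof -
  have e: "r * ((K * (a + 1) + 1) + 1) + (K * (b + 1) + 1) = K * (r * a + r + b + 1) + 2 * r + 1"
    by (simp add: algebra_simps)
  have 1: "K * (r * a + r + b + 1) \<le> K * (F + 1)" using assms(3) by simp
  have "2 \<le> a" using assms(1,2) by simp
  hence "r * 2 \<le> r * a" by (rule mult_le_mono2)
  hence "r * 2 \<le> F" using assms(3) by linarith
  hence 2: "2 * r \<le> F + 1" by simp
  have 3: "Suc K * (F + 1) + 1 = K * (F + 1) + (F + 1) + 1" by simp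
  show ?thesis unfolding e 3 using 1 2 by linarith
qed

lemma card_ge1: "x \<noteq> [] \<Longrightarrow> 1 \<le> card (set x)"
  by (simp add: Suc_leI card_gt_0_iff)

lemma main:
  fixes x :: "'a list"
  shows "card (set x) \<le> k \<Longrightarrow> \<exists>E. x \<in> E \<and> dc E \<and> sound n x E \<and> W E (k * (f k n + 1) + 1)"
proof (induction k arbitrary: n x rule: less_induct)
  case (less k)
  show ?case
  proof (cases "x = []")
    case True
    have A1: "x \<in> {v. set v \<subseteq> {}}" using True by simp
    have A2: "sound n x {v. set v \<subseteq> {}}" unfolding sound_def using True by (auto simp: simeq_refl)
    have A3: "W {v. set v \<subseteq> {}} (k * (f k n + 1) + 1)" by (rule W_mono[OF W_lists]) simp
    show ?thesis by (rule exI[of _ "{v. set v \<subseteq> {}}"]) (intro conjI A1 A2 A3 dc_lists)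
  next
    case False
    define B where "B = set x"
    have fB: "finite B" unfolding B_def by simp
    have c1: "1 \<le> card B" unfolding B_def using card_ge1[OF False] .
    show ?thesis
    proof (cases "card B < k")
      case True
      have "\<exists>E. x \<in> E \<and> dc E \<and> sound n x E \<and> W E (card B * (f (card B) n + 1) + 1)"
        by (rule less.IH[OF True]) (simp add: B_def)
      then obtain E where E: "x \<in> E \<and> dc E \<and> sound n x E \<and> W E (card B * (f (card B) n + 1) + 1)" ..
      have "f (card B) n \<le> f k n" using f_mono c1 True by simp
      hence "card B * (f (card B) n + 1) + 1 \<le> k * (f k n + 1) + 1" using True
        by (intro add_le_mono mult_le_mono) auto
      moreover have "W E (card B * (f (card B) n + 1) + 1)" using E by simp
      ultimately have "W E (k * (f k n + 1) + 1)" using W_mono by blast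
      thus ?thesis using E by (intro exI[of _ E]) simp
    next
      case False2: False
      hence ck: "card B = k" using less.prems B_def by simp
      have "B \<noteq> {}" using c1 by auto
      have "\<exists>bs t. x = blk bs t \<and> bprop B bs \<and> \<not> B \<subseteq> set t \<and> set t \<subseteq> B"
        by (rule decomp) (use \<open>B \<noteq> {}\<close> B_def in auto)
      then obtain bs t where bt: "x = blk bs t \<and> bprop B bs \<and> \<not> B \<subseteq> set t \<and> set t \<subseteq> B" by (elim exE) (erule that)
      define r where "r = length bs"
      show ?thesis
      proof (cases "n \<le> r")
        case True
        have "univ B r x" using univ_blk bt unfolding r_def by blast
        hence ux: "univ B n x" using True univ_mono by blast
        have A1: "x \<in> {v. set v \<subseteq> B}" unfolding B_def by simp
        have A2: "sound n x {v. set v \<subseteq> B}" unfolding sound_def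
        proof
          fix v assume "v \<in> {v. set v \<subseteq> B}"
          hence "simeq n (x @ v) x" using univ_simeq[OF ux] B_def by simp
          moreover have "subseq v (x @ v)" by (rule subseq_drop_many) simp
          ultimately show "\<exists>z. set z \<subseteq> set x \<and> simeq n z x \<and> subseq v z"
            using \<open>v \<in> {v. set v \<subseteq> B}\<close> B_def by (intro exI[of _ "x @ v"]) auto
        qed
        have A3: "W {v. set v \<subseteq> B} (k * (f k n + 1) + 1)" by (rule W_mono[OF W_lists]) simp
        show ?thesis by (rule exI[of _ "{v. set v \<subseteq> B}"]) (intro conjI A1 A2 A3 dc_lists)
      next
        case rn: False
        show ?thesis
        proof (cases "k = 1")
          case True
          then obtain c where Bc: "B = {c}" using ck card_1_singletonE by blast
          have u0: "\<forall>(u,c')\<in>set bs. length u \<le> 0"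
          proof
            fix p assume "p \<in> set bs"
            obtain u c' where p: "p = (u,c')" by (cases p)
            have "c' \<in> B" "set u \<subseteq> B - {c'}" using bt \<open>p \<in> set bs\<close> p unfolding bprop_def by auto
            hence "u = []" using Bc by auto
            thus "case p of (u,c') \<Rightarrow> length u \<le> 0" using p by simp
          qed
          have t1: "c \<notin> set t" "set t \<subseteq> {c}" using bt Bc by simp_all
          have "t = []"
          proof (cases t)
            case (Cons y ys)
            hence "y \<in> set t" by simp
            thus ?thesis using t1 by auto
          qed simp
          hence "length x \<le> r" using sum_blk_bound[OF u0] bt length_blk[of bs t] unfolding r_def by simp
          hence lx: "length x + 1 \<le> k * (f k n + 1) + 1" using rn True by simp
          have A2: "sound n x {v. subseq v x}" unfolding sound_def
            using simeq_refl by (auto intro: exI[of _ x])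
          have A3: "W {v. subseq v x} (k * (f k n + 1) + 1)" by (rule W_mono[OF W_down lx])
          have A1: "x \<in> {v. subseq v x}" by simp
          show ?thesis by (rule exI[of _ "{v. subseq v x}"]) (intro conjI A1 A2 A3 dc_down)
        next
          case False
          then obtain k' where kk: "k = Suc (Suc k')" using c1 ck by (cases k; cases "k - 1") auto
          define K where "K = Suc k'"
          have KL: "K < k" using kk K_def by simp
          have IH: "\<And>y m. card (set (y::'a list)) \<le> K \<Longrightarrow> \<exists>E. y \<in> E \<and> dc E \<and> sound m y E \<and> W E (K * (f K m + 1) + 1)"
            by (rule less.IH[OF KL])
          have cu: "\<forall>(u,c)\<in>set bs. card (set u) \<le> K"
          proof
            fix p assume "p \<in> set bs"
            obtain u c' where p: "p = (u,c')" by (cases p)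
            have "c' \<in> B" "set u \<subseteq> B - {c'}" using bt \<open>p \<in> set bs\<close> p unfolding bprop_def by auto
            hence "card (set u) \<le> card (B - {c'})" using fB by (intro card_mono) auto
            also have "\<dots> = K" using \<open>c' \<in> B\<close> fB ck kk K_def by simp
            finally show "case p of (u,c) \<Rightarrow> card (set u) \<le> K" using p by simp
          qed
          have "set t \<subset> B" using bt by auto
          hence "card (set t) < card B" by (rule psubset_card_mono[OF fB])
          hence "card (set t) < k" using ck by simp
          hence ct: "card (set t) \<le> K" using kk K_def by simp
          define m1 where "m1 = n + 1 - r"
          define m2 where "m2 = n - r"
          have "1 \<le> m1" using rn m1_def by simp
          have "\<exists>E. blk bs t \<in> E \<and> dc E \<and> W E (length bs * ((K * (f K m1 + 1) + 1) + 1) + (K * (f K m2 + 1) + 1)) \<and>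
             (\<forall>v\<in>E. \<exists>zs zt. list_all2 (rel m1) zs bs \<and> set zt \<subseteq> set t \<and> simeq m2 zt t \<and> subseq v (blk zs zt))"
            by (rule inner[OF IH]) (use bt cu ct \<open>1 \<le> m1\<close> in auto)
          then obtain E where E: "blk bs t \<in> E \<and> dc E \<and> W E (length bs * ((K * (f K m1 + 1) + 1) + 1) + (K * (f K m2 + 1) + 1)) \<and>
             (\<forall>v\<in>E. \<exists>zs zt. list_all2 (rel m1) zs bs \<and> set zt \<subseteq> set t \<and> simeq m2 zt t \<and> subseq v (blk zs zt))" ..
          have fe: "r * f K m1 + r + f K m2 \<le> f k n"
            using f_elem[of r n k'] rn unfolding m1_def m2_def K_def kk by simp
          have fa: "n + 1 - r \<le> f K m1" using f_ge[of K m1] K_def m1_def by simp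
          have bnd: "length bs * ((K * (f K m1 + 1) + 1) + 1) + (K * (f K m2 + 1) + 1) \<le> k * (f k n + 1) + 1"
            using arith_main[of r n "f K m1" "f K m2" "f k n" K] rn fe fa kk K_def unfolding r_def by simp
          have snd: "sound n x E" unfolding sound_def
          proof
            fix v assume "v \<in> E"
            have E4: "\<forall>v\<in>E. \<exists>zs zt. list_all2 (rel m1) zs bs \<and> set zt \<subseteq> set t \<and> simeq m2 zt t \<and> subseq v (blk zs zt)" using E by simp
            have "\<exists>zs zt. list_all2 (rel m1) zs bs \<and> set zt \<subseteq> set t \<and> simeq m2 zt t \<and> subseq v (blk zs zt)" using E4 \<open>v \<in> E\<close> by (rule bspec)
            then obtain zs zt where zz: "list_all2 (rel m1) zs bs \<and> set zt \<subseteq> set t \<and> simeq m2 zt t \<and> subseq v (blk zs zt)" by (elim exE) (erule that)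
            have stB: "set zt \<subseteq> B" using zz bt by auto
            have "simeq n ([] @ blk bs t) ([] @ blk zs zt)"
              by (rule Rep[of m1 zs bs B zt t m2 0 "[]" n]) (use zz bt stB univ_0 m1_def m2_def rn r_def in auto)
            hence "simeq n (blk zs zt) x" using bt simeq_sym by simp
            moreover have "set (blk zs zt) \<subseteq> B" by (rule set_blk_rel[of m1 zs bs B zt]) (use zz bt stB in simp_all)
            hence "set (blk zs zt) \<subseteq> set x" unfolding B_def .
            ultimately show "\<exists>z. set z \<subseteq> set x \<and> simeq n z x \<and> subseq v z" using zz by (intro exI[of _ "blk zs zt"]) simp
          qed
          have wE: "W E (length bs * ((K * (f K m1 + 1) + 1) + 1) + (K * (f K m2 + 1) + 1))" using E by simp
          have A3: "W E (k * (f k n + 1) + 1)" by (rule W_mono[OF wE bnd])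
          have A1: "x \<in> E" using E bt by simp
          have A2: "dc E" using E by simp
          show ?thesis by (rule exI[of _ E]) (intro conjI A1 A2 A3 snd)
        qed
      qed
    qed
  qed
qed



lemma rel_refl: "list_all2 (rel m) bs bs"
  by (induction bs) (auto simp: simeq_refl)

lemma maxlen:
  fixes v :: "'a list"
  shows "card (set v) \<le> k \<Longrightarrow> 1 \<le> k \<Longrightarrow> (\<forall>z. set z \<subseteq> set v \<longrightarrow> simeq n z v \<longrightarrow> subseq v z \<longrightarrow> z = v) \<Longrightarrow> length v \<le> f k n"
proof (induction k arbitrary: n v rule: less_induct)
  case (less k)
  show ?case
  proof (cases "v = []")
    case True thus ?thesis by simp
  next
    case False
    define B where "B = set v"
    have fB: "finite B" unfolding B_def by simp
    have c1: "1 \<le> card B" unfolding B_def using card_ge1[OF False] .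
    have mx: "\<forall>z. set z \<subseteq> set v \<longrightarrow> simeq n z v \<longrightarrow> subseq v z \<longrightarrow> z = v" using less.prems(3) .
    show ?thesis
    proof (cases "card B < k")
      case True
      have "length v \<le> f (card B) n"
        by (rule less.IH[OF True]) (use c1 mx B_def in auto)
      moreover have "f (card B) n \<le> f k n" using f_mono c1 True by simp
      ultimately show ?thesis by simp
    next
      case False2: False
      hence ck: "card B = k" using less.prems B_def by simp
      have "B \<noteq> {}" using c1 by auto
      have "\<exists>bs t. v = blk bs t \<and> bprop B bs \<and> \<not> B \<subseteq> set t \<and> set t \<subseteq> B"
        by (rule decomp) (use \<open>B \<noteq> {}\<close> B_def in auto)
      then obtain bs t where bt: "v = blk bs t \<and> bprop B bs \<and> \<not> B \<subseteq> set t \<and> set t \<subseteq> B" by (elim exE) (erule that)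
      define r where "r = length bs"
      have rn: "r < n"
      proof (rule ccontr)
        assume "\<not> r < n"
        have "univ B r v" using univ_blk bt unfolding r_def by blast
        moreover have "n \<le> r" using \<open>\<not> r < n\<close> by simp
        ultimately have ux: "univ B n v" by (rule univ_mono)
        have hv: "hd v \<in> set v" using False by simp
        have "simeq n (v @ [hd v]) v" using univ_simeq[OF ux] hv B_def by simp
        moreover have "subseq v (v @ [hd v])" by (rule subseq_rev_drop_many) simp
        moreover have "set (v @ [hd v]) \<subseteq> set v" using hv by simp
        ultimately have "v @ [hd v] = v" using mx by blast
        thus False by simp
      qed
      show ?thesis
      proof (cases "k = 1")
        case True
        then obtain c where Bc: "B = {c}" using ck card_1_singletonE by blast
        have u0: "\<forall>(u,c')\<in>set bs. length u \<le> 0"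
        proof
          fix p assume "p \<in> set bs"
          obtain u c' where p: "p = (u,c')" by (cases p)
          have "c' \<in> B" "set u \<subseteq> B - {c'}" using bt \<open>p \<in> set bs\<close> p unfolding bprop_def by auto
          hence "u = []" using Bc by auto
          thus "case p of (u,c') \<Rightarrow> length u \<le> 0" using p by simp
        qed
        have t1: "c \<notin> set t" "set t \<subseteq> {c}" using bt Bc by simp_all
        have "t = []"
        proof (cases t)
          case (Cons y ys)
          hence "y \<in> set t" by simp
          thus ?thesis using t1 by auto
        qed simp
        hence "length v \<le> r" using sum_blk_bound[OF u0] bt length_blk[of bs t] unfolding r_def by simp
        thus ?thesis using rn True by simp
      next
        case False
        then obtain k' where kk: "k = Suc (Suc k')" using c1 ck by (cases k; cases "k - 1") auto
        define K where "K = Suc k'"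
        have KL: "K < k" using kk K_def by simp
        define m1 where "m1 = n + 1 - r"
        define m2 where "m2 = n - r"
        have stB: "set t \<subseteq> B" using bt by simp
        have bpr: "bprop B bs" using bt by simp
        have blk_bound: "\<forall>(u,c)\<in>set bs. length u \<le> f K m1"
        proof
          fix p assume pin: "p \<in> set bs"
          obtain u c where p: "p = (u,c)" by (cases p)
          obtain bs1 bs2 where spl: "bs = bs1 @ p # bs2" using split_list[OF pin] by blast
          have pc: "c \<in> B" "set u \<subseteq> B - {c}" using bt pin p unfolding bprop_def by auto
          hence "card (set u) \<le> card (B - {c})" using fB by (intro card_mono) auto
          also have "\<dots> = K" using \<open>c \<in> B\<close> fB ck kk K_def by simp
          finally have cu: "card (set u) \<le> K" .
          have mu: "\<forall>z. set z \<subseteq> set u \<longrightarrow> simeq m1 z u \<longrightarrow> subseq u z \<longrightarrow> z = u"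
          proof (intro allI impI)
            fix z assume z: "set z \<subseteq> set u" "simeq m1 z u" "subseq u z"
            define zs where "zs = bs1 @ (z,c) # bs2"
            have szu: "set z = set u" using z(1) subseq_set[OF z(3)] by auto
            have la: "list_all2 (rel m1) zs bs" unfolding zs_def spl p
              by (intro list_all2_appendI) (auto simp: rel_refl szu z(2))
            have "simeq n ([] @ blk bs t) ([] @ blk zs t)"
              by (rule Rep[of m1 zs bs B t t m2 0 "[]" n]) (use la bpr stB univ_0 m1_def m2_def rn r_def simeq_refl in auto)
            hence sq: "simeq n (blk zs t) v" using bt simeq_sym by simp
            have ev: "v = concat (map (\<lambda>(u,c). u @ [c]) bs1) @ (u @ c # blk bs2 t)"
              using bt spl p blk_app[of bs1 "p # bs2" t] by simp
            have ez: "blk zs t = concat (map (\<lambda>(u,c). u @ [c]) bs1) @ (z @ c # blk bs2 t)"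
              unfolding zs_def using blk_app[of bs1 "(z,c) # bs2" t] by simp
            have "subseq v (blk zs t)" unfolding ev ez
              by (intro list_emb_append_mono) (auto simp: z(3) list_emb_append_mono)
            moreover have "set (blk zs t) \<subseteq> B" by (rule set_blk_rel[OF la bpr stB])
            ultimately have "blk zs t = v" using mx sq B_def by blast
            hence "z @ c # blk bs2 t = u @ c # blk bs2 t" using ev ez by simp
            thus "z = u" by simp
          qed
          have "length u \<le> f K m1" by (rule less.IH[OF KL cu]) (use mu K_def in auto)
          thus "case p of (u,c) \<Rightarrow> length u \<le> f K m1" using p by simp
        qed
        have "set t \<subset> B" using bt by auto
        hence "card (set t) < card B" by (rule psubset_card_mono[OF fB])
        hence ct: "card (set t) \<le> K" using ck kk K_def by simp
        have mt: "\<forall>z. set z \<subseteq> set t \<longrightarrow> simeq m2 z t \<longrightarrow> subseq t z \<longrightarrow> z = t"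
        proof (intro allI impI)
          fix z assume z: "set z \<subseteq> set t" "simeq m2 z t" "subseq t z"
          have szB: "set z \<subseteq> B" using z(1) stB by auto
          have "simeq n ([] @ blk bs t) ([] @ blk bs z)"
            by (rule Rep[of m1 bs bs B z t m2 0 "[]" n]) (use rel_refl bpr stB szB z(2) univ_0 m1_def m2_def rn r_def in auto)
          hence sq: "simeq n (blk bs z) v" using bt simeq_sym by simp
          have "subseq v (blk bs z)" using bt z(3) unfolding blk_def by (simp add: list_emb_append_mono)
          moreover have "set (blk bs z) \<subseteq> B" by (rule set_blk[OF bpr szB])
          ultimately have "blk bs z = v" using mx sq B_def by blast
          thus "z = t" using bt unfolding blk_def by simp
        qed
        have lt: "length t \<le> f K m2" by (rule less.IH[OF KL ct]) (use mt K_def in auto)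
        have "length v = sum_list (map (\<lambda>(u,c). length u + 1) bs) + length t" using bt length_blk by simp
        also have "\<dots> \<le> r * (f K m1 + 1) + f K m2" using sum_blk_bound[OF blk_bound] lt unfolding r_def by (intro add_le_mono) auto
        also have "\<dots> = r * f K m1 + r + f K m2" by (simp add: algebra_simps)
        also have "\<dots> \<le> f k n" using f_elem[of r n k'] rn unfolding m1_def m2_def K_def kk by simp
        finally show ?thesis .
      qed
    qed
  qed
qed

lemma short_eq:
  assumes "simeq N u v" "length v < N"
  shows "u = v"
proof -
  have vu: "subseq v u" using assms unfolding simeq_def by auto
  have "length u \<le> length v"
  proof (rule ccontr)
    assume "\<not> length u \<le> length v"
    hence l: "length (take (Suc (length v)) u) = Suc (length v)" by simp
    have "subseq (take (Suc (length v)) u) u" by (rule subseq_take)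
    hence "subseq (take (Suc (length v)) u) v" using assms l unfolding simeq_def by auto
    hence "length (take (Suc (length v)) u) \<le> length v" by (rule list_emb_length)
    thus False using l by simp
  qed
  moreover have "length v \<le> length u" using vu by (rule list_emb_length)
  ultimately show ?thesis using subseq_same_length[OF vu] by simp
qed



theorem theorem15:
  fixes A :: "'a set" and L :: "'a list set" and k n m :: nat
  assumes "finite A" and "A \<noteq> {}" and "card A = k"
    and "is_PT A n L"
    and "m = f k n"
  shows "is_PT A ((k + 1) * (m + 1)) (down L) \<and>
         is_PT A ((k + 1) * (m + 1)) (down_strict L)"
proof -
  define N where "N = (k + 1) * (m + 1)"
  have "0 < card A" using assms(1,2) by (simp add: card_gt_0_iff)
  hence k1: "1 \<le> k" using assms(3) by simp
  have LA: "L \<subseteq> lists A" using assms(4) unfolding is_PT_def by simp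
  have PT: "\<And>u v. u \<in> lists A \<Longrightarrow> v \<in> lists A \<Longrightarrow> simeq n u v \<Longrightarrow> u \<in> L \<Longrightarrow> v \<in> L"
    using assms(4) unfolding is_PT_def by blast
  have cardx: "\<And>x. x \<in> L \<Longrightarrow> card (set x) \<le> k"
  proof -
    fix x assume "x \<in> L"
    hence "set x \<subseteq> A" using LA by auto
    thus "card (set x) \<le> k" using assms(1,3) card_mono by blast
  qed
  have hN: "k * (f k n + 1) + 1 \<le> N" unfolding N_def assms(5) by simp
  have mN: "f k n < N" unfolding N_def assms(5) by simp
  have down_sub: "down L \<subseteq> lists A"
  proof
    fix v assume "v \<in> down L"
    then obtain x where x: "x \<in> L" "subseq v x" unfolding down_def by blast
    have "set v \<subseteq> set x" by (rule subseq_set[OF x(2)])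
    moreover have "set x \<subseteq> A" using x(1) LA by auto
    ultimately show "v \<in> lists A" by auto
  qed
  have ds_sub: "down_strict L \<subseteq> lists A"
  proof
    fix v assume "v \<in> down_strict L"
    then obtain x where x: "x \<in> L" "strict_subseq v x" unfolding down_strict_def by blast
    have "set v \<subseteq> set x" using x(2) subseq_set unfolding strict_subseq_def by blast
    moreover have "set x \<subseteq> A" using x(1) LA by auto
    ultimately show "v \<in> lists A" by auto
  qed
  have L1: "\<And>u v. u \<in> lists A \<Longrightarrow> v \<in> lists A \<Longrightarrow> simeq N u v \<Longrightarrow> u \<in> down L \<Longrightarrow> v \<in> down L"
  proof -
    fix u v assume uv: "u \<in> lists A" "v \<in> lists A" "simeq N u v" "u \<in> down L"
    then obtain x where x: "x \<in> L" "subseq u x" unfolding down_def by blast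
    have "\<exists>E. x \<in> E \<and> dc E \<and> sound n x E \<and> W E (k * (f k n + 1) + 1)" by (rule main[OF cardx[OF x(1)]])
    then obtain E where E: "x \<in> E \<and> dc E \<and> sound n x E \<and> W E (k * (f k n + 1) + 1)" ..
    have dE: "dc E" using E by simp
    have uE: "u \<in> E" using dE E x(2) unfolding dc_def by blast
    have vE: "v \<in> E"
    proof (rule ccontr)
      assume "v \<notin> E"
      have wE: "W E (k * (f k n + 1) + 1)" using E by simp
      have "\<exists>w. subseq w v \<and> length w \<le> k * (f k n + 1) + 1 \<and> w \<notin> E"
        using wE \<open>v \<notin> E\<close> unfolding W_def by blast
      then obtain w where w: "subseq w v \<and> length w \<le> k * (f k n + 1) + 1 \<and> w \<notin> E" ..
      have "length w \<le> N" using w hN by simp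
      hence "subseq w u" using w uv(3) unfolding simeq_def by blast
      hence "w \<in> E" using dE uE unfolding dc_def by blast
      thus False using w by simp
    qed
    have "\<exists>z. set z \<subseteq> set x \<and> simeq n z x \<and> subseq v z" using E vE unfolding sound_def by blast
    then obtain z where z: "set z \<subseteq> set x \<and> simeq n z x \<and> subseq v z" ..
    have xA: "x \<in> lists A" using x(1) LA by auto
    have zA: "z \<in> lists A" using z xA by auto
    have "z \<in> L" using PT[OF xA zA simeq_sym[of n z x] x(1)] z by simp
    thus "v \<in> down L" using z unfolding down_def by blast
  qed
  have L2: "\<And>u v. u \<in> lists A \<Longrightarrow> v \<in> lists A \<Longrightarrow> simeq N u v \<Longrightarrow> u \<in> down_strict L \<Longrightarrow> v \<in> down_strict L"
  proof -
    fix u v assume uv: "u \<in> lists A" "v \<in> lists A" "simeq N u v" "u \<in> down_strict L"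
    obtain x0 where x0: "x0 \<in> L" "strict_subseq u x0" using uv(4) unfolding down_strict_def by blast
    have "subseq u x0" using x0(2) unfolding strict_subseq_def by simp
    hence "u \<in> down L" using x0(1) unfolding down_def by blast
    hence "v \<in> down L" by (rule L1[OF uv(1,2,3)])
    then obtain x where x: "x \<in> L" "subseq v x" unfolding down_def by blast
    show "v \<in> down_strict L"
    proof (cases "\<exists>z\<in>L. strict_subseq v z")
      case True thus ?thesis unfolding down_strict_def by blast
    next
      case False
      have nz: "z = v" if zz: "z \<in> L" "subseq v z" for z
      proof (rule ccontr)
        assume "z \<noteq> v"
        hence "strict_subseq v z" using zz(2) unfolding strict_subseq_def by simp
        thus False using False zz(1) by blast
      qed
      have "x = v" by (rule nz[OF x])
      hence vL: "v \<in> L" using x(1) by simp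
      have mx: "\<forall>z. set z \<subseteq> set v \<longrightarrow> simeq n z v \<longrightarrow> subseq v z \<longrightarrow> z = v"
      proof (intro allI impI)
        fix z assume z: "set z \<subseteq> set v" "simeq n z v" "subseq v z"
        have zA: "z \<in> lists A" using z(1) uv(2) by auto
        have "z \<in> L" using PT[OF uv(2) zA simeq_sym[OF z(2)] vL] .
        thus "z = v" using nz z(3) by simp
      qed
      have "length v \<le> f k n" by (rule maxlen[OF cardx[OF vL] k1 mx])
      hence "length v < N" using mN by simp
      hence "u = v" by (rule short_eq[OF uv(3)])
      thus ?thesis using uv(4) by simp
    qed
  qed
  have P1: "is_PT A N (down L)" unfolding is_PT_def
  proof (intro conjI ballI impI iffI)
    show "down L \<subseteq> lists A" by (rule down_sub)
  next
    fix u v assume "u \<in> lists A" "v \<in> lists A" "simeq N u v" "u \<in> down L"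
    thus "v \<in> down L" by (rule L1)
  next
    fix u v assume a: "u \<in> lists A" "v \<in> lists A" "simeq N u v" "v \<in> down L"
    show "u \<in> down L" by (rule L1[OF a(2,1) simeq_sym[OF a(3)] a(4)])
  qed
  have P2: "is_PT A N (down_strict L)" unfolding is_PT_def
  proof (intro conjI ballI impI iffI)
    show "down_strict L \<subseteq> lists A" by (rule ds_sub)
  next
    fix u v assume "u \<in> lists A" "v \<in> lists A" "simeq N u v" "u \<in> down_strict L"
    thus "v \<in> down_strict L" by (rule L2)
  next
    fix u v assume a: "u \<in> lists A" "v \<in> lists A" "simeq N u v" "v \<in> down_strict L"
    show "u \<in> down_strict L" by (rule L2[OF a(2,1) simeq_sym[OF a(3)] a(4)])
  qed
  show ?thesis using P1 P2 unfolding N_def by simp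
qed


end
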